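(* Let $F$ be a field of characteristic $2$, $R$ a commutative $F$-algebra, $a,b\in R$, $T=R[\alpha]:=R[t]/(t^2+t+a)$ with $\alpha$ the image of $t$, and $x+y\alpha\in T^\times$ (with $x,y\in R$) such that $x^2+xy+ay^2=u^2+uv+bv^2$ for some $u,v\in R$. If $v+y\in R^\times$, then $(v+y)(x+y\alpha)\in N_T(b)$. In particular, \[\{b,x+y\alpha\}_T=\{b,v+y\}_T\] in $\operatorname{Br}(T)$.
   Context: For a commutative $F$-algebra $S$ (with $\operatorname{char}F=2$), $c\in S$ and $d\in S^\times$, $[c,d)_S$ denotes the quaternion algebra $S\oplus Si\oplus Sj\oplus Sk$ with multiplication $i^2+i=c$, $j^2=d$, $ij=k=ji+j$; its class in the Brauer group $\operatorname{Br}(S)$ is denoted $\{c,d\}_S$. $N_S(c)$ denotes the subgroup of $S^\times$ consisting of all units of the form $X^2+XY+cY^2$ with $X,Y\in S$ (the image of the norm map from $(S[t]/(t^2+t+c))^\times$). *)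

theory Defs
  imports Main
begin

text \<open>The quadratic extension T = R[alpha] = R[t]/(t^2+t+a), represented via its
R-basis 1, alpha: the pair (x, y) stands for x + y*alpha.  Multiplication uses
alpha^2 = -alpha - a.\<close>

definition qadd :: "'a::comm_ring_1 \<times> 'a \<Rightarrow> 'a \<times> 'a \<Rightarrow> 'a \<times> 'a" where
  "qadd p q = (fst p + fst q, snd p + snd q)"

definition qmul :: "'a::comm_ring_1 \<Rightarrow> 'a \<times> 'a \<Rightarrow> 'a \<times> 'a \<Rightarrow> 'a \<times> 'a" where
  "qmul a p q = (fst p * fst q - a * snd p * snd q,
                 fst p * snd q + snd p * fst q - snd p * snd q)"

definition qemb :: "'a::comm_ring_1 \<Rightarrow> 'a \<times> 'a" where
  "qemb r = (r, 0)"

definition qunit :: "'a::comm_ring_1 \<Rightarrow> 'a \<times> 'a \<Rightarrow> bool" where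
  "qunit a p \<longleftrightarrow> (\<exists>q. qmul a p q = qemb 1)"

definition qnorms :: "'a::comm_ring_1 \<Rightarrow> 'a \<times> 'a \<Rightarrow> ('a \<times> 'a) set" where
  "qnorms a c = {z. qunit a z \<and> (\<exists>X Y. z = qadd (qadd (qmul a X X) (qmul a X Y))
                                                 (qmul a c (qmul a Y Y)))}"

end

theory Submission
  imports Defs
begin

theorem lemma3p3:
  fixes a b x y u v :: "'a::comm_ring_1"
  assumes char2: "(2::'a) = 0"
    and unitT: "qunit a (x, y)"
    and eq: "x^2 + x*y + a*y^2 = u^2 + u*v + b*v^2"
    and unitR: "\<exists>w. (v + y) * w = 1"
  shows "qmul a (qemb (v + y)) (x, y) \<in> qnorms a (qemb b)"
proof -
  obtain w where w: "(v + y) * w = 1" using unitR by blast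
  obtain q where q: "qmul a (x, y) q = qemb 1" using unitT unfolding qunit_def by blast
  have unit: "qunit a (qmul a (qemb (v + y)) (x, y))"
    unfolding qunit_def
  proof (rule exI[of _ "qmul a (qemb w) q"])
    obtain q1 q2 where qq: "q = (q1, q2)" by (cases q)
    from q have e1: "x*q1 - a*y*q2 = 1" and e2: "x*q2 + y*q1 - y*q2 = 0"
      by (auto simp: qmul_def qemb_def qq)
    have "fst (qmul a (qmul a (qemb (v + y)) (x, y)) (qmul a (qemb w) q)) = ((v+y)*w) * (x*q1 - a*y*q2)"
      by (simp add: qmul_def qemb_def qq algebra_simps)
    moreover have "snd (qmul a (qmul a (qemb (v + y)) (x, y)) (qmul a (qemb w) q)) = ((v+y)*w) * (x*q2 + y*q1 - y*q2)"
      by (simp add: qmul_def qemb_def qq algebra_simps)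
    ultimately show "qmul a (qmul a (qemb (v + y)) (x, y)) (qmul a (qemb w) q) = qemb 1"
      using e1 e2 w by (simp add: qemb_def prod_eq_iff)
  qed
  have c2: "\<And>z::'a. 2 * z = 0" using char2 by simp
  have f1: "(x+u)*(x+u) - a*y*y + (x+u)*v + b*(v*v) = (v+y)*x"
  proof -
    have "(x+u)*(x+u) - a*y*y + (x+u)*v + b*(v*v) = 2*(x*x) + 2*(x*u) + x*y + x*v
           + ((u^2 + u*v + b*v^2) - (x^2 + x*y + a*y^2))"
      by (simp add: algebra_simps power2_eq_square)
    also have "\<dots> = (v+y)*x" using eq c2 by (simp add: algebra_simps)
    finally show ?thesis .
  qed
  have f2: "(x+u)*y + y*(x+u) - y*y + y*v = (v+y)*y"
  proof -
    have "(x+u)*y + y*(x+u) - y*y + y*v = 2*((x+u)*y) - 2*(y*y) + (v+y)*y"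
      by (simp add: algebra_simps)
    thus ?thesis using c2 by simp
  qed
  have "qmul a (qemb (v + y)) (x, y) =
        qadd (qadd (qmul a (x+u, y) (x+u, y)) (qmul a (x+u, y) (qemb v))) (qmul a (qemb b) (qmul a (qemb v) (qemb v)))"
    using f1 f2 by (simp add: qmul_def qadd_def qemb_def algebra_simps)
  with unit show ?thesis unfolding qnorms_def by blast
qed

end
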